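(* Let $H$ be a Hopf algebra over a field $k$. For all $x,y\in H$, the elements $p_x=t_{x_1}t_{S(x_2)}$ and $q_{x,y}=t_{x_1}t_{y_1}t_{S(x_2y_2)}$ of $S(t_H)$, identified with $p_x\otimes1$ and $q_{x,y}\otimes1$ in $S(t_H)\otimes H$, belong to $\bar\mu(\mathcal{V}_H)$.
   Context: Sweedler notation $\Delta(x)=x_1\otimes x_2$; $S$ is the antipode of $H$. Let $t_H=\{t_x:x\in H\}$ be a copy of the vector space $H$ ($x\mapsto t_x$ linear) and $S(t_H)$ its symmetric algebra. Let $X_H=\{X_x:x\in H\}$ be another copy of $H$ and $T(X_H)$ the tensor algebra, a right $H$-comodule algebra via $\delta_T(X_x)=X_{x_1}\otimes x_2$. Give $S(t_H)\otimes H$ the right $H$-comodule algebra structure $\mathrm{id}\otimes\Delta$. Let $\mu:T(X_H)\to S(t_H)\otimes H$ be the algebra map with $\mu(X_x)=t_{x_1}\otimes x_2$ (an $H$-comodule algebra map), $I_H=\ker\mu$, $\mathcal{U}_H=T(X_H)/I_H$ (the universal $H$-comodule algebra), $\bar\mu:\mathcal{U}_H\hookrightarrow S(t_H)\otimes H$ the induced injection, and $\mathcal{V}_H=\{u\in\mathcal{U}_H:\delta(u)=u\otimes1\}$ its subalgebra of right $H$-coinvariants. *)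

theory Defs
  imports "HOL-Library.Poly_Mapping"
begin

text \<open>All vector spaces over the field 'k are represented concretely by
  finitely supported coefficient functions on a basis: a vector with basis indexed by
  type 'a is an element of  ('a =>0 'k).  Tensor products of such spaces are
  represented on the product basis  'a \<times> 'c.  The Hopf algebra H is given by a basis
  indexed by the type 'b (every vector space has a basis) and its structure maps on
  basis vectors.\<close>

definition smult :: "'k::field \<Rightarrow> ('a \<Rightarrow>\<^sub>0 'k) \<Rightarrow> ('a \<Rightarrow>\<^sub>0 'k)" where
  "smult r v = Poly_Mapping.map (\<lambda>c. r * c) v"

definition lin :: "('a \<Rightarrow> ('c \<Rightarrow>\<^sub>0 'k::field)) \<Rightarrow> ('a \<Rightarrow>\<^sub>0 'k) \<Rightarrow> ('c \<Rightarrow>\<^sub>0 'k)" where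
  "lin f v = (\<Sum>a\<in>Poly_Mapping.keys v. smult (Poly_Mapping.lookup v a) (f a))"

definition bas :: "'a \<Rightarrow> ('a \<Rightarrow>\<^sub>0 'k::field)" where
  "bas a = Poly_Mapping.single a 1"

definition tens :: "('a \<Rightarrow>\<^sub>0 'k::field) \<Rightarrow> ('c \<Rightarrow>\<^sub>0 'k) \<Rightarrow> ('a \<times> 'c \<Rightarrow>\<^sub>0 'k)" where
  "tens v w = lin (\<lambda>a. lin (\<lambda>c. bas (a, c)) w) v"

definition tmap :: "('a \<Rightarrow> ('c \<Rightarrow>\<^sub>0 'k::field)) \<Rightarrow> ('d \<Rightarrow> ('e \<Rightarrow>\<^sub>0 'k))
    \<Rightarrow> ('a \<times> 'd \<Rightarrow>\<^sub>0 'k) \<Rightarrow> ('c \<times> 'e \<Rightarrow>\<^sub>0 'k)" where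
  "tmap f g = lin (\<lambda>(a, d). tens (f a) (g d))"

definition bmul :: "('a \<Rightarrow> 'a \<Rightarrow> ('a \<Rightarrow>\<^sub>0 'k::field)) \<Rightarrow> ('a \<Rightarrow>\<^sub>0 'k) \<Rightarrow> ('a \<Rightarrow>\<^sub>0 'k) \<Rightarrow> ('a \<Rightarrow>\<^sub>0 'k)" where
  "bmul m v w = lin (\<lambda>a. lin (\<lambda>c. m a c) w) v"

definition tmul :: "('a \<Rightarrow> 'a \<Rightarrow> ('a \<Rightarrow>\<^sub>0 'k::field)) \<Rightarrow> ('c \<Rightarrow> 'c \<Rightarrow> ('c \<Rightarrow>\<^sub>0 'k))
    \<Rightarrow> ('a \<times> 'c) \<Rightarrow> ('a \<times> 'c) \<Rightarrow> ('a \<times> 'c \<Rightarrow>\<^sub>0 'k)" where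
  "tmul mA mB = (\<lambda>(a, b) (c, d). tens (mA a c) (mB b d))"

definition eps :: "('b \<Rightarrow> 'k::field) \<Rightarrow> ('b \<Rightarrow>\<^sub>0 'k) \<Rightarrow> 'k" where
  "eps cu x = (\<Sum>a\<in>Poly_Mapping.keys x. Poly_Mapping.lookup x a * cu a)"

definition hopf_algebra ::
  "('b \<Rightarrow> 'b \<Rightarrow> ('b \<Rightarrow>\<^sub>0 'k::field)) \<Rightarrow> ('b \<Rightarrow>\<^sub>0 'k) \<Rightarrow> ('b \<Rightarrow> ('b \<times> 'b \<Rightarrow>\<^sub>0 'k))
    \<Rightarrow> ('b \<Rightarrow> 'k) \<Rightarrow> ('b \<Rightarrow> ('b \<Rightarrow>\<^sub>0 'k)) \<Rightarrow> bool" where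
  "hopf_algebra mul one cmul cu ant \<longleftrightarrow>
     (\<forall>x y z. bmul mul (bmul mul x y) z = bmul mul x (bmul mul y z)) \<and>
     (\<forall>x. bmul mul one x = x \<and> bmul mul x one = x) \<and>
     (\<forall>x. lin (\<lambda>((a, b), c). bas (a, b, c)) (tmap cmul bas (lin cmul x))
            = tmap bas cmul (lin cmul x)) \<and>
     (\<forall>x. lin (\<lambda>(a, b). smult (cu a) (bas b)) (lin cmul x) = x \<and>
          lin (\<lambda>(a, b). smult (cu b) (bas a)) (lin cmul x) = x) \<and>
     (\<forall>x y. lin cmul (bmul mul x y) = bmul (tmul mul mul) (lin cmul x) (lin cmul y)) \<and>
     lin cmul one = tens one one \<and>
     (\<forall>x y. eps cu (bmul mul x y) = eps cu x * eps cu y) \<and>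
     eps cu one = 1 \<and>
     (\<forall>x. lin (\<lambda>(a, b). bmul mul (ant a) (bas b)) (lin cmul x) = smult (eps cu x) one \<and>
          lin (\<lambda>(a, b). bmul mul (bas a) (ant b)) (lin cmul x) = smult (eps cu x) one)"

subsection \<open>The symmetric algebra S(t_H) = k[t_b : b basis], and S(t_H) \<otimes> H\<close>

text \<open>Polynomials: poly_mappings from monomials ('b =>0 nat) to 'k, a commutative ring via Poly_Mapping.\<close>
definition tvar :: "'b \<Rightarrow> (('b \<Rightarrow>\<^sub>0 nat) \<Rightarrow>\<^sub>0 'k::field)" where
  "tvar b = Poly_Mapping.single (Poly_Mapping.single b 1) 1"

definition tH :: "('b \<Rightarrow>\<^sub>0 'k::field) \<Rightarrow> (('b \<Rightarrow>\<^sub>0 nat) \<Rightarrow>\<^sub>0 'k)" where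
  "tH x = lin tvar x"

definition SH_mul :: "('b \<Rightarrow> 'b \<Rightarrow> ('b \<Rightarrow>\<^sub>0 'k::field))
   \<Rightarrow> (('b \<Rightarrow>\<^sub>0 nat) \<times> 'b \<Rightarrow>\<^sub>0 'k) \<Rightarrow> (('b \<Rightarrow>\<^sub>0 nat) \<times> 'b \<Rightarrow>\<^sub>0 'k) \<Rightarrow> (('b \<Rightarrow>\<^sub>0 nat) \<times> 'b \<Rightarrow>\<^sub>0 'k)" where
  "SH_mul mul = bmul (tmul (\<lambda>m m'. bas (m + m')) mul)"

definition SH_one :: "('b \<Rightarrow>\<^sub>0 'k::field) \<Rightarrow> (('b \<Rightarrow>\<^sub>0 nat) \<times> 'b \<Rightarrow>\<^sub>0 'k)" where
  "SH_one one = tens 1 one"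

subsection \<open>Tensor algebra T(X_H): basis = words in the basis of H, X_b = [b]\<close>

definition TH_mul :: "('b list \<Rightarrow>\<^sub>0 'k::field) \<Rightarrow> ('b list \<Rightarrow>\<^sub>0 'k) \<Rightarrow> ('b list \<Rightarrow>\<^sub>0 'k)" where
  "TH_mul = bmul (\<lambda>v w. bas (v @ w))"

definition XH :: "('b \<Rightarrow>\<^sub>0 'k::field) \<Rightarrow> ('b list \<Rightarrow>\<^sub>0 'k)" where
  "XH x = lin (\<lambda>b. bas [b]) x"

text \<open>mu: the algebra map T(X_H) \<rightarrow> S(t_H) \<otimes> H with mu(X_b) = t_{b_1} \<otimes> b_2,
  i.e. mu(X_{b1} ... X_{bn}) = mu(X_{b1}) ... mu(X_{bn}).\<close>
definition mu_gen :: "('b \<Rightarrow> ('b \<times> 'b \<Rightarrow>\<^sub>0 'k::field)) \<Rightarrow> 'b \<Rightarrow> (('b \<Rightarrow>\<^sub>0 nat) \<times> 'b \<Rightarrow>\<^sub>0 'k)" where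
  "mu_gen cmul b = lin (\<lambda>(i, j). tens (tvar i) (bas j)) (cmul b)"

definition mu :: "('b \<Rightarrow> 'b \<Rightarrow> ('b \<Rightarrow>\<^sub>0 'k::field)) \<Rightarrow> ('b \<Rightarrow>\<^sub>0 'k) \<Rightarrow> ('b \<Rightarrow> ('b \<times> 'b \<Rightarrow>\<^sub>0 'k))
   \<Rightarrow> ('b list \<Rightarrow>\<^sub>0 'k) \<Rightarrow> (('b \<Rightarrow>\<^sub>0 nat) \<times> 'b \<Rightarrow>\<^sub>0 'k)" where
  "mu mul one cmul = lin (\<lambda>w. foldr (\<lambda>b acc. SH_mul mul (mu_gen cmul b) acc) w (SH_one one))"

text \<open>The coaction delta_T : T(X_H) \<rightarrow> T(X_H) \<otimes> H, the algebra map with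
  delta_T(X_b) = X_{b_1} \<otimes> b_2.\<close>
definition deltaT_gen :: "('b \<Rightarrow> ('b \<times> 'b \<Rightarrow>\<^sub>0 'k::field)) \<Rightarrow> 'b \<Rightarrow> ('b list \<times> 'b \<Rightarrow>\<^sub>0 'k)" where
  "deltaT_gen cmul b = lin (\<lambda>(i, j). tens (bas [i]) (bas j)) (cmul b)"

definition deltaT :: "('b \<Rightarrow> 'b \<Rightarrow> ('b \<Rightarrow>\<^sub>0 'k::field)) \<Rightarrow> ('b \<Rightarrow>\<^sub>0 'k) \<Rightarrow> ('b \<Rightarrow> ('b \<times> 'b \<Rightarrow>\<^sub>0 'k))
   \<Rightarrow> ('b list \<Rightarrow>\<^sub>0 'k) \<Rightarrow> ('b list \<times> 'b \<Rightarrow>\<^sub>0 'k)" where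
  "deltaT mul one cmul = lin (\<lambda>w. foldr (\<lambda>b acc.
       bmul (tmul (\<lambda>v w. bas (v @ w)) mul) (deltaT_gen cmul b) acc) w (tens (bas []) one))"

subsection \<open>U_H = T(X_H)/I_H, its coinvariants V_H, and mubar(V_H)\<close>

definition I_H :: "('b \<Rightarrow> 'b \<Rightarrow> ('b \<Rightarrow>\<^sub>0 'k::field)) \<Rightarrow> ('b \<Rightarrow>\<^sub>0 'k) \<Rightarrow> ('b \<Rightarrow> ('b \<times> 'b \<Rightarrow>\<^sub>0 'k))
   \<Rightarrow> ('b list \<Rightarrow>\<^sub>0 'k) set" where
  "I_H mul one cmul = {a. mu mul one cmul a = 0}"

text \<open>I_H \<otimes> H as a subspace of T(X_H) \<otimes> H; it is the kernel of
  \<pi> \<otimes> id : T(X_H) \<otimes> H \<rightarrow> U_H \<otimes> H.\<close>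
definition I_H_tensor_H :: "('b \<Rightarrow> 'b \<Rightarrow> ('b \<Rightarrow>\<^sub>0 'k::field)) \<Rightarrow> ('b \<Rightarrow>\<^sub>0 'k) \<Rightarrow> ('b \<Rightarrow> ('b \<times> 'b \<Rightarrow>\<^sub>0 'k))
   \<Rightarrow> ('b list \<times> 'b \<Rightarrow>\<^sub>0 'k) set" where
  "I_H_tensor_H mul one cmul =
     {z. \<exists>(n::nat) f g. (\<forall>j<n. f j \<in> I_H mul one cmul) \<and> z = (\<Sum>j<n. tens (f j) (g j))}"

text \<open>The class [a] \<in> U_H is coinvariant, delta([a]) = [a] \<otimes> 1 in U_H \<otimes> H,
  iff delta_T(a) - a \<otimes> 1 \<in> I_H \<otimes> H.  mubar([a]) = mu(a).  Hence
  mubar(V_H) is the following set.\<close>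
definition mubar_V_H :: "('b \<Rightarrow> 'b \<Rightarrow> ('b \<Rightarrow>\<^sub>0 'k::field)) \<Rightarrow> ('b \<Rightarrow>\<^sub>0 'k) \<Rightarrow> ('b \<Rightarrow> ('b \<times> 'b \<Rightarrow>\<^sub>0 'k))
   \<Rightarrow> (('b \<Rightarrow>\<^sub>0 nat) \<times> 'b \<Rightarrow>\<^sub>0 'k) set" where
  "mubar_V_H mul one cmul =
     {mu mul one cmul a | a. deltaT mul one cmul a - tens a one \<in> I_H_tensor_H mul one cmul}"

definition p_el :: "('b \<Rightarrow> ('b \<times> 'b \<Rightarrow>\<^sub>0 'k::field)) \<Rightarrow> ('b \<Rightarrow> ('b \<Rightarrow>\<^sub>0 'k))
   \<Rightarrow> ('b \<Rightarrow>\<^sub>0 'k) \<Rightarrow> (('b \<Rightarrow>\<^sub>0 nat) \<Rightarrow>\<^sub>0 'k)" where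
  "p_el cmul ant x = lin (\<lambda>(i, j). tH (bas i) * tH (lin ant (bas j))) (lin cmul x)"

definition q_el :: "('b \<Rightarrow> 'b \<Rightarrow> ('b \<Rightarrow>\<^sub>0 'k::field)) \<Rightarrow> ('b \<Rightarrow> ('b \<times> 'b \<Rightarrow>\<^sub>0 'k)) \<Rightarrow> ('b \<Rightarrow> ('b \<Rightarrow>\<^sub>0 'k))
   \<Rightarrow> ('b \<Rightarrow>\<^sub>0 'k) \<Rightarrow> ('b \<Rightarrow>\<^sub>0 'k) \<Rightarrow> (('b \<Rightarrow>\<^sub>0 nat) \<Rightarrow>\<^sub>0 'k)" where
  "q_el mul cmul ant x y =
     lin (\<lambda>(i, j). lin (\<lambda>(k, l).
        tH (bas i) * tH (bas k) * tH (lin ant (bmul mul (bas j) (bas l)))) (lin cmul y)) (lin cmul x)"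

end

theory Submission
  imports Defs
begin
lemma lookup_smult[simp]: "Poly_Mapping.lookup (smult r v) a = r * Poly_Mapping.lookup v a"
  unfolding smult_def by (simp add: Poly_Mapping.map.rep_eq when_def)

lemma smult_add: "smult r (u + v) = smult r u + smult r v"
  by (rule poly_mapping_eqI) (simp add: lookup_add algebra_simps)
lemma smult_add2: "smult (r + s) u = smult r u + smult s u"
  by (rule poly_mapping_eqI) (simp add: lookup_add algebra_simps)
lemma smult_smult: "smult r (smult s u) = smult (r * s) u"
  by (rule poly_mapping_eqI) (simp add: algebra_simps)
lemma smult_one[simp]: "smult 1 u = u"
  by (rule poly_mapping_eqI) simp
lemma smult_zero[simp]: "smult 0 u = 0"
  by (rule poly_mapping_eqI) simp
lemma smult_0[simp]: "smult r 0 = 0"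
  by (rule poly_mapping_eqI) simp
lemma smult_sum: "smult r (sum f A) = (\<Sum>a\<in>A. smult r (f a))"
  by (rule poly_mapping_eqI) (simp add: lookup_sum sum_distrib_left)
lemma smult_minus: "smult r (u - v) = smult r u - smult r v"
  by (rule poly_mapping_eqI) (simp add: lookup_minus algebra_simps)

lemma lin_superset:
  assumes "finite A" "Poly_Mapping.keys v \<subseteq> A"
  shows "lin f v = (\<Sum>a\<in>A. smult (Poly_Mapping.lookup v a) (f a))"
  unfolding lin_def
  by (rule sum.mono_neutral_left) (use assms in \<open>auto simp: in_keys_iff\<close>)

lemma lin_add: "lin f (u + v) = lin f u + lin f v"
proof -
  let ?A = "Poly_Mapping.keys u \<union> Poly_Mapping.keys v"
  have k: "Poly_Mapping.keys (u+v) \<subseteq> ?A" by (simp add: keys_add)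
  show ?thesis
    by (simp add: lin_superset[OF _ k] lin_superset[of ?A u] lin_superset[of ?A v]
        lookup_add smult_add2 sum.distrib)
qed

lemma keys_smult: "Poly_Mapping.keys (smult r v) \<subseteq> Poly_Mapping.keys v"
  by (auto simp: in_keys_iff)

lemma lin_smult: "lin f (smult r v) = smult r (lin f v)"
  by (simp add: lin_superset[OF _ keys_smult] lin_superset[of "Poly_Mapping.keys v"] smult_sum smult_smult)

lemma lin_zero[simp]: "lin f 0 = 0"
  by (simp add: lin_def)

lemma bas_keys[simp]: "Poly_Mapping.keys (bas a :: _ \<Rightarrow>\<^sub>0 'k::field) = {a}"
  by (simp add: bas_def)

lemma lin_bas[simp]: "lin f (bas a) = f a"
  by (simp add: lin_def bas_def)

lemma lin_cong: "(\<And>a. a \<in> Poly_Mapping.keys v \<Longrightarrow> f a = g a) \<Longrightarrow> lin f v = lin g v"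
  by (simp add: lin_def)

lemma lin_fun_add: "lin (\<lambda>a. f a + g a) v = lin f v + lin g v"
  by (simp add: lin_def smult_add sum.distrib)
lemma lin_fun_smult: "lin (\<lambda>a. smult r (f a)) v = smult r (lin f v)"
  by (simp add: lin_def smult_smult smult_sum mult.commute)

lemma lin_bas_id[simp]: "lin bas v = v"
proof (rule poly_mapping_eqI)
  fix c
  have "Poly_Mapping.lookup (lin bas v) c = (\<Sum>a\<in>Poly_Mapping.keys v. Poly_Mapping.lookup v a * (if a = c then 1 else 0))"
    by (simp add: lin_def lookup_sum bas_def lookup_single when_def eq_commute)
  also have "\<dots> = (\<Sum>a\<in>Poly_Mapping.keys v. if a = c then Poly_Mapping.lookup v a else 0)"
    by (rule sum.cong) auto
  also have "\<dots> = Poly_Mapping.lookup v c"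
    by (simp add: sum.delta in_keys_iff)
  finally show "Poly_Mapping.lookup (lin bas v) c = Poly_Mapping.lookup v c" .
qed

definition lmap :: "(('a \<Rightarrow>\<^sub>0 'k::field) \<Rightarrow> ('c \<Rightarrow>\<^sub>0 'k)) \<Rightarrow> bool" where
  "lmap f \<longleftrightarrow> (\<forall>u v. f (u + v) = f u + f v) \<and> (\<forall>r u. f (smult r u) = smult r (f u))"

lemma lmapD: "lmap f \<Longrightarrow> f (u + v) = f u + f v" "lmap f \<Longrightarrow> f (smult r u) = smult r (f u)"
  by (auto simp: lmap_def)

lemma lmap_zero: "lmap f \<Longrightarrow> f 0 = 0"
  using lmapD(2)[of f 0 0] by simp

lemma lmap_sum: "lmap f \<Longrightarrow> f (sum g A) = (\<Sum>a\<in>A. f (g a))"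
  by (induction A rule: infinite_finite_induct) (auto simp: lmap_zero lmapD)

lemma lmap_lin: "lmap f \<Longrightarrow> f (lin g v) = lin (\<lambda>a. f (g a)) v"
  by (simp add: lin_def lmap_sum lmapD)

lemma lmap_lin_bas: "lmap f \<Longrightarrow> lin (\<lambda>a. f (bas a)) v = f v"
  using lmap_lin[of f bas v] by simp

lemma lmap_lin_self[simp]: "lmap (lin f)"
  by (simp add: lmap_def lin_add lin_smult)

lemma lmap_lin_param: "(\<And>a. lmap (h a)) \<Longrightarrow> lmap (\<lambda>w. lin (\<lambda>a. h a w) v)"
  unfolding lmap_def
proof (intro conjI allI)
  assume h: "\<And>a. (\<forall>u v. h a (u + v) = h a u + h a v) \<and> (\<forall>r u. h a (smult r u) = smult r (h a u))"
  fix u w r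
  show "lin (\<lambda>a. h a (u + w)) v = lin (\<lambda>a. h a u) v + lin (\<lambda>a. h a w) v"
    using h by (simp add: lin_fun_add)
  show "lin (\<lambda>a. h a (smult r u)) v = smult r (lin (\<lambda>a. h a u) v)"
    using h by (simp add: lin_fun_smult)
qed

lemma lmap_comp: "lmap f \<Longrightarrow> lmap g \<Longrightarrow> lmap (\<lambda>x. f (g x))"
  by (simp add: lmap_def)

lemma lmap_id: "lmap (\<lambda>x. x)" by (simp add: lmap_def)

lemma lin_swap: "lin (\<lambda>p. lin (\<lambda>q. g p q) w) v = lin (\<lambda>q. lin (\<lambda>p. g p q) v) w"
proof -
  have "lin (\<lambda>p. lin (\<lambda>q. g p q) w) v = (\<Sum>p\<in>Poly_Mapping.keys v. \<Sum>q\<in>Poly_Mapping.keys w.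
      smult (Poly_Mapping.lookup v p * Poly_Mapping.lookup w q) (g p q))"
    unfolding lin_def smult_sum smult_smult ..
  also have "\<dots> = (\<Sum>q\<in>Poly_Mapping.keys w. \<Sum>p\<in>Poly_Mapping.keys v.
      smult (Poly_Mapping.lookup v p * Poly_Mapping.lookup w q) (g p q))"
    by (rule sum.swap)
  also have "\<dots> = lin (\<lambda>q. lin (\<lambda>p. g p q) v) w"
    unfolding lin_def smult_sum smult_smult by (simp add: mult.commute)
  finally show ?thesis .
qed

definition bilin :: "(('a \<Rightarrow>\<^sub>0 'k::field) \<Rightarrow> ('c \<Rightarrow>\<^sub>0 'k) \<Rightarrow> ('d \<Rightarrow>\<^sub>0 'k)) \<Rightarrow> bool" where
  "bilin F \<longleftrightarrow> (\<forall>u. lmap (F u)) \<and> (\<forall>v. lmap (\<lambda>u. F u v))"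

lemma bilinI: "(\<And>u. lmap (F u)) \<Longrightarrow> (\<And>v. lmap (\<lambda>u. F u v)) \<Longrightarrow> bilin F"
  by (simp add: bilin_def)
lemma bilinD1: "bilin F \<Longrightarrow> lmap (F u)" by (simp add: bilin_def)
lemma bilinD2: "bilin F \<Longrightarrow> lmap (\<lambda>u. F u v)" by (simp add: bilin_def)

lemma bilin_expand: "bilin F \<Longrightarrow> F u v = lin (\<lambda>a. lin (\<lambda>b. F (bas a) (bas b)) v) u"
proof -
  assume F: "bilin F"
  have "F u v = lin (\<lambda>a. F (bas a) v) u"
    using lmap_lin_bas[OF bilinD2[OF F, of v]] by simp
  also have "\<dots> = lin (\<lambda>a. lin (\<lambda>b. F (bas a) (bas b)) v) u"
    using lmap_lin_bas[OF bilinD1[OF F]] by simp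
  finally show ?thesis .
qed

lemma bilin_eq: "bilin F \<Longrightarrow> bilin G \<Longrightarrow> (\<And>a b. F (bas a) (bas b) = G (bas a) (bas b)) \<Longrightarrow> F u v = G u v"
  using bilin_expand[of F u v] bilin_expand[of G u v] by simp

lemma lmap_tens1: "lmap (\<lambda>v. tens v w)"
  unfolding tens_def by simp
lemma lmap_tens2: "lmap (\<lambda>w. tens v w)"
  unfolding tens_def by (rule lmap_lin_param) simp
lemma bilin_tens: "bilin tens"
  by (rule bilinI) (simp_all add: lmap_tens1 lmap_tens2[unfolded tens_def, folded tens_def])

lemma bilin_bmul: "bilin (bmul m)"
  unfolding bmul_def by (rule bilinI) (auto intro: lmap_lin_param)

lemma tens_bas[simp]: "tens (bas a) (bas c) = bas (a, c)"
  by (simp add: tens_def)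
lemma bmul_bas[simp]: "bmul m (bas a) (bas c) = m a c"
  by (simp add: bmul_def)

lemma lmap_smult: "lmap (smult r)"
  by (simp add: lmap_def smult_add smult_smult mult.commute)

definition swb :: "(('a \<Rightarrow>\<^sub>0 'k::field) \<Rightarrow> ('c \<Rightarrow>\<^sub>0 'k) \<Rightarrow> ('d \<Rightarrow>\<^sub>0 'k)) \<Rightarrow> ('a \<times> 'c \<Rightarrow>\<^sub>0 'k) \<Rightarrow> ('d \<Rightarrow>\<^sub>0 'k)" where
  "swb F z = lin (\<lambda>(i, j). F (bas i) (bas j)) z"

lemma swb_eq: "swb F = lin (\<lambda>(i, j). F (bas i) (bas j))"
  by (rule ext) (simp add: swb_def)
lemma lmap_swb[simp]: "lmap (swb F)"
  by (simp add: swb_eq)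

lemma swb_bas[simp]: "swb F (bas (a, c)) = F (bas a) (bas c)"
  by (simp add: swb_def)

lemma swb_push: "lmap L \<Longrightarrow> L (swb F z) = swb (\<lambda>a b. L (F a b)) z"
  unfolding swb_def by (simp add: lmap_lin case_prod_unfold)

lemma swb_cong: "(\<And>i j. F (bas i) (bas j) = G (bas i) (bas j)) \<Longrightarrow> swb F z = swb G z"
  unfolding swb_def by (rule lin_cong) (auto simp: case_prod_unfold)

lemma lmap_swb_param: "(\<And>i j. lmap (\<lambda>x. F x (bas i) (bas j))) \<Longrightarrow> lmap (\<lambda>x. swb (F x) z)"
  unfolding swb_def case_prod_unfold by (rule lmap_lin_param) simp

lemma swb_swap: "swb (\<lambda>a b. swb (\<lambda>c d. Z a b c d) w) z = swb (\<lambda>c d. swb (\<lambda>a b. Z a b c d) z) w"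
  unfolding swb_def case_prod_unfold by (rule lin_swap)

lemma swb_tens: "bilin F \<Longrightarrow> swb F (tens u v) = F u v"
proof (rule bilin_eq[of "\<lambda>u v. swb F (tens u v)" F])
  show "bilin (\<lambda>u v. swb F (tens u v))"
    by (rule bilinI; rule lmap_comp[OF lmap_swb]) (simp_all add: lmap_tens1 lmap_tens2)
qed auto

lemma lmap_compI: "lmap f \<Longrightarrow> lmap g \<Longrightarrow> lmap (\<lambda>x. f (g x))" by (rule lmap_comp)

lemma eps_superset: "finite A \<Longrightarrow> Poly_Mapping.keys v \<subseteq> A \<Longrightarrow>
   eps cu v = (\<Sum>a\<in>A. Poly_Mapping.lookup v a * cu a)"
  unfolding eps_def by (rule sum.mono_neutral_left) (auto simp: in_keys_iff)

lemma eps_add: "eps cu (u + v) = eps cu u + eps cu v"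
proof -
  let ?A = "Poly_Mapping.keys u \<union> Poly_Mapping.keys v"
  have k: "Poly_Mapping.keys (u+v) \<subseteq> ?A" by (simp add: keys_add)
  show ?thesis
    by (simp add: eps_superset[OF _ k] eps_superset[of ?A u] eps_superset[of ?A v]
        lookup_add sum.distrib algebra_simps)
qed

lemma eps_smult: "eps cu (smult r v) = r * eps cu v"
  by (simp add: eps_superset[OF _ keys_smult] eps_superset[of "Poly_Mapping.keys v"] sum_distrib_left mult.assoc)

lemma eps_bas[simp]: "eps cu (bas a) = cu a"
  by (simp add: eps_def bas_def)

lemma lmap_eps_smult: "lmap (\<lambda>x. smult (eps cu x) w)"
  by (simp add: lmap_def eps_add eps_smult smult_add2 smult_smult)

lemma tens_bas_left: "tens (bas a) w = lin (\<lambda>c. bas (a, c)) w"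
  by (simp add: tens_def)
lemma tens_bas_right: "tens w (bas d) = lin (\<lambda>a. bas (a, d)) w"
  by (simp add: tens_def)

definition swc :: "('b \<Rightarrow> ('b \<times> 'b \<Rightarrow>\<^sub>0 'k::field)) \<Rightarrow> (('b \<Rightarrow>\<^sub>0 'k) \<Rightarrow> ('b \<Rightarrow>\<^sub>0 'k) \<Rightarrow> ('d \<Rightarrow>\<^sub>0 'k)) \<Rightarrow> ('b \<Rightarrow>\<^sub>0 'k) \<Rightarrow> ('d \<Rightarrow>\<^sub>0 'k)" where
  "swc cmul F x = swb F (lin cmul x)"

lemma lmap_swc[simp]: "lmap (swc cmul F)"
proof -
  have "swc cmul F = (\<lambda>x. swb F (lin cmul x))" by (rule ext) (simp add: swc_def)
  then show ?thesis by (simp add: lmap_comp[OF lmap_swb lmap_lin_self])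
qed

lemma swc_push: "lmap L \<Longrightarrow> L (swc cmul F x) = swc cmul (\<lambda>a b. L (F a b)) x"
  unfolding swc_def by (rule swb_push)
lemma swc_cong: "(\<And>i j. F (bas i) (bas j) = G (bas i) (bas j)) \<Longrightarrow> swc cmul F x = swc cmul G x"
  unfolding swc_def by (rule swb_cong)
lemma lmap_swc_param: "(\<And>i j. lmap (\<lambda>x. F x (bas i) (bas j))) \<Longrightarrow> lmap (\<lambda>x. swc cmul (F x) z)"
  unfolding swc_def by (rule lmap_swb_param)
lemma swc_swap: "swc cmul (\<lambda>a b. swc cmul (\<lambda>c d. Z a b c d) w) z = swc cmul (\<lambda>c d. swc cmul (\<lambda>a b. Z a b c d) z) w"
  unfolding swc_def by (rule swb_swap)

locale hopf =
  fixes mul :: "'b \<Rightarrow> 'b \<Rightarrow> ('b \<Rightarrow>\<^sub>0 'k::field)"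
    and one :: "'b \<Rightarrow>\<^sub>0 'k"
    and cmul :: "'b \<Rightarrow> ('b \<times> 'b \<Rightarrow>\<^sub>0 'k)"
    and cu :: "'b \<Rightarrow> 'k"
    and ant :: "'b \<Rightarrow> ('b \<Rightarrow>\<^sub>0 'k)"
  assumes H: "hopf_algebra mul one cmul cu ant"
begin

abbreviation m where "m \<equiv> bmul mul"
abbreviation S where "S \<equiv> lin ant"
abbreviation \<epsilon> where "\<epsilon> \<equiv> eps cu"
abbreviation sw where "sw \<equiv> swc cmul"

lemma m_assoc: "m (m x y) z = m x (m y z)"
  using H by (simp add: hopf_algebra_def)
lemma m_oneL[simp]: "m one x = x"
  using H by (simp add: hopf_algebra_def)
lemma m_oneR[simp]: "m x one = x"
  using H by (simp add: hopf_algebra_def)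

lemma coassoc: "sw (\<lambda>u v. sw (\<lambda>a b. F a b v) u) x = sw (\<lambda>u v. sw (\<lambda>a b. F u a b) v) x"
proof -
  define L where "L = lin (\<lambda>(a, b, c). F (bas a) (bas b) (bas c))"
  have ax: "lin (\<lambda>((a, b), c). bas (a, b, c)) (tmap cmul bas (lin cmul x)) = tmap bas cmul (lin cmul x)"
    using H by (simp add: hopf_algebra_def)
  have "L (lin (\<lambda>((a, b), c). bas (a, b, c)) (tmap cmul bas (lin cmul x)))
      = lin (\<lambda>p. L ((\<lambda>((a, b), c). bas (a, b, c)) p)) (tmap cmul bas (lin cmul x))"
    unfolding L_def by (rule lmap_lin) simp
  also have "\<dots> = lin (\<lambda>((a, b), c). F (bas a) (bas b) (bas c)) (tmap cmul bas (lin cmul x))"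
    unfolding L_def by (rule lin_cong) auto
  also have "\<dots> = lin (\<lambda>p. lin (\<lambda>((a, b), c). F (bas a) (bas b) (bas c))
        ((\<lambda>(a, d). tens (cmul a) (bas d)) p)) (lin cmul x)"
    unfolding tmap_def by (rule lmap_lin) simp
  also have "\<dots> = sw (\<lambda>u v. sw (\<lambda>a b. F a b v) u) x"
    unfolding swc_def swb_def
    by (rule lin_cong) (auto simp: tens_bas_right lmap_lin case_prod_unfold)
  finally have l: "L (lin (\<lambda>((a, b), c). bas (a, b, c)) (tmap cmul bas (lin cmul x))) = sw (\<lambda>u v. sw (\<lambda>a b. F a b v) u) x" .
  have "L (tmap bas cmul (lin cmul x)) = lin (\<lambda>p. L ((\<lambda>(a, d). tens (bas a) (cmul d)) p)) (lin cmul x)"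
    unfolding L_def tmap_def by (rule lmap_lin) simp
  also have "\<dots> = sw (\<lambda>u v. sw (\<lambda>a b. F u a b) v) x"
    unfolding swc_def swb_def L_def
    by (rule lin_cong) (auto simp: tens_bas_left lmap_lin case_prod_unfold)
  finally show ?thesis using l ax by simp
qed


lemma counitL: assumes f: "lmap f" shows "sw (\<lambda>a b. smult (\<epsilon> a) (f b)) x = f x"
proof -
  have ax: "lin (\<lambda>(a, b). smult (cu a) (bas b)) (lin cmul x) = x"
    using H by (simp add: hopf_algebra_def)
  have "f x = lin (\<lambda>p. f ((\<lambda>(a, b). smult (cu a) (bas b)) p)) (lin cmul x)"
    using lmap_lin[OF f, of "\<lambda>(a, b). smult (cu a) (bas b)" "lin cmul x"] ax by simp
  also have "\<dots> = sw (\<lambda>a b. smult (\<epsilon> a) (f b)) x"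
    unfolding swc_def swb_def by (rule lin_cong) (auto simp: lmapD[OF f])
  finally show ?thesis by simp
qed

lemma counitR: assumes f: "lmap f" shows "sw (\<lambda>a b. smult (\<epsilon> b) (f a)) x = f x"
proof -
  have ax: "lin (\<lambda>(a, b). smult (cu b) (bas a)) (lin cmul x) = x"
    using H by (simp add: hopf_algebra_def)
  have "f x = lin (\<lambda>p. f ((\<lambda>(a, b). smult (cu b) (bas a)) p)) (lin cmul x)"
    using lmap_lin[OF f, of "\<lambda>(a, b). smult (cu b) (bas a)" "lin cmul x"] ax by simp
  also have "\<dots> = sw (\<lambda>a b. smult (\<epsilon> b) (f a)) x"
    unfolding swc_def swb_def by (rule lin_cong) (auto simp: lmapD[OF f])
  finally show ?thesis by simp
qed

lemma antiL: "sw (\<lambda>a b. m (S a) b) x = smult (\<epsilon> x) one"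
proof -
  have ax: "lin (\<lambda>(a, b). bmul mul (ant a) (bas b)) (lin cmul x) = smult (eps cu x) one"
    using H by (simp add: hopf_algebra_def)
  show ?thesis unfolding swc_def swb_def ax[symmetric]
    by (rule lin_cong) auto
qed

lemma antiR: "sw (\<lambda>a b. m a (S b)) x = smult (\<epsilon> x) one"
proof -
  have ax: "lin (\<lambda>(a, b). bmul mul (bas a) (ant b)) (lin cmul x) = smult (eps cu x) one"
    using H by (simp add: hopf_algebra_def)
  show ?thesis unfolding swc_def swb_def ax[symmetric]
    by (rule lin_cong) auto
qed

lemma Dmult: assumes G: "bilin G"
  shows "sw G (m u v) = sw (\<lambda>a b. sw (\<lambda>c d. G (m a c) (m b d)) v) u"
proof -
  have ax: "lin cmul (m u v) = bmul (tmul mul mul) (lin cmul u) (lin cmul v)"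
    using H by (simp add: hopf_algebra_def)
  have "sw G (m u v) = swb G (lin (\<lambda>p. lin (\<lambda>q. tmul mul mul p q) (lin cmul v)) (lin cmul u))"
    unfolding swc_def ax by (simp only: bmul_def[of "tmul mul mul"])
  also have "\<dots> = lin (\<lambda>p. swb G (lin (\<lambda>q. tmul mul mul p q) (lin cmul v))) (lin cmul u)"
    by (rule lmap_lin) simp
  also have "\<dots> = lin (\<lambda>p. lin (\<lambda>q. swb G (tmul mul mul p q)) (lin cmul v)) (lin cmul u)"
    by (rule lin_cong, rule lmap_lin) simp
  also have "\<dots> = lin (\<lambda>(a, b). lin (\<lambda>(c, d). G (m (bas a) (bas c)) (m (bas b) (bas d))) (lin cmul v)) (lin cmul u)"
    by (rule lin_cong) (auto simp: case_prod_unfold tmul_def swb_tens[OF G] intro!: lin_cong)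
  also have "\<dots> = sw (\<lambda>a b. sw (\<lambda>c d. G (m a c) (m b d)) v) u"
    by (simp add: swc_def swb_def)
  finally show ?thesis .
qed

lemma Done: assumes G: "bilin G" shows "sw G one = G one one"
proof -
  have ax: "lin cmul one = tens one one"
    using H by (simp add: hopf_algebra_def)
  show ?thesis unfolding swc_def ax by (rule swb_tens[OF G])
qed

end

context hopf begin

lemma Phi: assumes K: "bilin K"
  shows "sw (\<lambda>a b. sw (\<lambda>c d. K c (m a d)) (S b)) h = K (S h) one"
proof -
  define \<Lambda> where "\<Lambda> = (\<lambda>z b. sw (\<lambda>a' b'. sw (\<lambda>c d. K (m z c) (m a' d)) (S b')) b)"
  have lin_z: "lmap (\<lambda>z. \<Lambda> z b)" for b
    unfolding \<Lambda>_def
    by (intro lmap_swc_param lmap_comp[OF bilinD2[OF K] bilinD2[OF bilin_bmul]])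
  have lin_b: "lmap (\<Lambda> z)" for z
    unfolding \<Lambda>_def by simp
  have inner: "sw (\<lambda>g1 g2. \<Lambda> (m s g1) g2) g = smult (\<epsilon> g) (K s one)" for s g
  proof -
    define Ks where "Ks = (\<lambda>e f. K (m s e) f)"
    have Ks: "bilin Ks"
      unfolding Ks_def
      by (intro bilinI lmap_comp[OF bilinD2[OF K] bilinD1[OF bilin_bmul]] bilinD1[OF K])
    have "sw (\<lambda>g1 g2. \<Lambda> (m s g1) g2) g
        = sw (\<lambda>g1 g2. sw (\<lambda>a' b'. sw (\<lambda>c d. Ks (m g1 c) (m a' d)) (S b')) g2) g"
      by (simp add: \<Lambda>_def Ks_def m_assoc)
    also have "\<dots> = sw (\<lambda>u v. sw (\<lambda>g1 a'. sw (\<lambda>c d. Ks (m g1 c) (m a' d)) (S v)) u) g"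
      by (rule coassoc[symmetric])
    also have "\<dots> = sw (\<lambda>u v. sw Ks (m u (S v))) g"
      by (simp add: Dmult[OF Ks])
    also have "\<dots> = sw Ks (sw (\<lambda>u v. m u (S v)) g)"
      by (rule swc_push[OF lmap_swc, symmetric])
    also have "\<dots> = sw Ks (smult (\<epsilon> g) one)"
      by (simp add: antiR)
    also have "\<dots> = smult (\<epsilon> g) (Ks one one)"
      by (simp add: lmapD(2)[OF lmap_swc] Done[OF Ks])
    finally show ?thesis by (simp add: Ks_def)
  qed
  have "sw (\<lambda>a b. sw (\<lambda>c d. K c (m a d)) (S b)) h = \<Lambda> one h"
    by (simp add: \<Lambda>_def)
  also have "\<dots> = sw (\<lambda>a b. smult (\<epsilon> a) (\<Lambda> one b)) h"
    by (rule counitL[OF lin_b, symmetric])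
  also have "\<dots> = sw (\<lambda>a b. \<Lambda> (smult (\<epsilon> a) one) b) h"
    by (simp add: lmapD(2)[OF lin_z])
  also have "\<dots> = sw (\<lambda>a b. \<Lambda> (sw (\<lambda>a1 a2. m (S a1) a2) a) b) h"
    by (simp add: antiL)
  also have "\<dots> = sw (\<lambda>a b. sw (\<lambda>a1 a2. \<Lambda> (m (S a1) a2) b) a) h"
    by (simp add: swc_push[OF lin_z])
  also have "\<dots> = sw (\<lambda>a b. sw (\<lambda>a1 a2. \<Lambda> (m (S a) a1) a2) b) h"
    by (rule coassoc)
  also have "\<dots> = sw (\<lambda>a b. smult (\<epsilon> b) (K (S a) one)) h"
    by (simp add: inner)
  also have "\<dots> = K (S h) one"
    by (rule counitR) (rule lmap_comp[OF bilinD2[OF K] lmap_lin_self])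
  finally show ?thesis .
qed

end

context hopf begin

lemma P_id: assumes K: "\<And>a. bilin (K a)"
  shows "sw (\<lambda>u v. sw (\<lambda>a b. sw (\<lambda>c d. K a c (m b d)) (S v)) u) x = sw (\<lambda>u v. K u (S v) one) x"
proof -
  have "sw (\<lambda>u v. sw (\<lambda>a b. sw (\<lambda>c d. K a c (m b d)) (S v)) u) x
      = sw (\<lambda>u v. sw (\<lambda>a b. sw (\<lambda>c d. K u c (m a d)) (S b)) v) x"
    by (rule coassoc)
  also have "\<dots> = sw (\<lambda>u v. K u (S v) one) x"
    by (simp add: Phi[OF K])
  finally show ?thesis .
qed

lemma Q_id: assumes K: "\<And>a a'. bilin (K a a')"
  shows "sw (\<lambda>u v. sw (\<lambda>u' v'. sw (\<lambda>a b. sw (\<lambda>a' b'. sw (\<lambda>c d. K a a' c (m (m b b') d)) (S (m v v'))) u') u) y) x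
       = sw (\<lambda>u v. sw (\<lambda>u' v'. K u u' (S (m v v')) one) y) x"
proof -
  define E where "E = (\<lambda>a b a' b' v v'. sw (\<lambda>c d. K a a' c (m (m b b') d)) (S (m v v')))"
  have s1: "sw (\<lambda>u' v'. sw (\<lambda>a b. sw (\<lambda>a' b'. E a b a' b' v v') u') u) y
      = sw (\<lambda>a b. sw (\<lambda>u' v'. sw (\<lambda>a' b'. E a b a' b' v v') u') y) u" for u v
    by (rule swc_swap)
  have s3: "sw (\<lambda>a b. sw (\<lambda>u' v'. sw (\<lambda>a' b'. E u a a' b' b v') u') y) v
      = sw (\<lambda>u' v'. K u u' (S (m v v')) one) y" for u v
  proof -
    have "sw (\<lambda>a b. sw (\<lambda>u' v'. sw (\<lambda>a' b'. E u a a' b' b v') u') y) v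
        = sw (\<lambda>u' v'. sw (\<lambda>a b. sw (\<lambda>a' b'. E u a a' b' b v') u') v) y"
      by (rule swc_swap)
    also have "\<dots> = sw (\<lambda>u' v'. sw (\<lambda>a' b'. sw (\<lambda>a b. E u a a' b' b v') v) u') y"
      by (simp only: swc_swap[of cmul "\<lambda>a b a' b'. E u a a' b' b _"])
    also have "\<dots> = sw (\<lambda>u' v'. sw (\<lambda>a' b'. sw (\<lambda>a b. E u a u' a' b b') v) v') y"
      by (rule coassoc)
    also have "\<dots> = sw (\<lambda>u' v'. sw (\<lambda>a b. sw (\<lambda>a' b'. E u a u' a' b b') v') v) y"
      by (simp only: swc_swap[of cmul "\<lambda>a' b' a b. E u a _ a' b b'"])
    also have "\<dots> = sw (\<lambda>u' v'. K u u' (S (m v v')) one) y"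
    proof -
      have "sw (\<lambda>a b. sw (\<lambda>a' b'. E u a u' a' b b') v') v = K u u' (S (m v v')) one" for u' v'
      proof -
        define G where "G = (\<lambda>h1 h2. sw (\<lambda>c d. K u u' c (m h1 d)) (S h2))"
        have G: "bilin G"
          unfolding G_def
          by (intro bilinI lmap_swc_param lmap_comp[OF bilinD1[OF K] bilinD2[OF bilin_bmul]]
              lmap_comp[OF lmap_swc lmap_lin_self])
        have "sw G (m v v') = sw (\<lambda>a b. sw (\<lambda>c d. G (m a c) (m b d)) v') v"
          by (rule Dmult[OF G])
        then have "sw (\<lambda>a b. sw (\<lambda>a' b'. E u a u' a' b b') v') v = sw G (m v v')"
          by (simp add: E_def G_def)
        also have "\<dots> = K u u' (S (m v v')) one"
          unfolding G_def by (rule Phi[OF K])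
        finally show ?thesis .
      qed
      then show ?thesis by simp
    qed
    finally show ?thesis .
  qed
  have "sw (\<lambda>u v. sw (\<lambda>u' v'. sw (\<lambda>a b. sw (\<lambda>a' b'. sw (\<lambda>c d. K a a' c (m (m b b') d)) (S (m v v'))) u') u) y) x
      = sw (\<lambda>u v. sw (\<lambda>a b. sw (\<lambda>u' v'. sw (\<lambda>a' b'. E a b a' b' v v') u') y) u) x"
    unfolding E_def by (rule arg_cong[where f = "\<lambda>F. sw F x"], intro ext, rule swc_swap)
  also have "\<dots> = sw (\<lambda>u v. sw (\<lambda>a b. sw (\<lambda>u' v'. sw (\<lambda>a' b'. E u a a' b' b v') u') y) v) x"
    by (rule coassoc)
  also have "\<dots> = sw (\<lambda>u v. sw (\<lambda>u' v'. K u u' (S (m v v')) one) y) x"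
    by (simp add: s3)
  finally show ?thesis .
qed

end

lemma XH_eq: "XH = lin (\<lambda>b. bas [b])"
  by (rule ext) (simp add: XH_def)
lemma lmap_XH[simp]: "lmap XH" by (simp add: XH_eq)
lemma bilin_TH_mul: "bilin TH_mul" unfolding TH_mul_def by (rule bilin_bmul)

locale hopf_word = hopf mul one cmul cu ant
  for mul :: "'b \<Rightarrow> 'b \<Rightarrow> ('b \<Rightarrow>\<^sub>0 'k::field)"
    and one :: "'b \<Rightarrow>\<^sub>0 'k"
    and cmul :: "'b \<Rightarrow> ('b \<times> 'b \<Rightarrow>\<^sub>0 'k)"
    and cu :: "'b \<Rightarrow> 'k"
    and ant :: "'b \<Rightarrow> ('b \<Rightarrow>\<^sub>0 'k)" +
  fixes op :: "'c \<Rightarrow> 'c \<Rightarrow> 'c" and e :: 'c and g :: "'b \<Rightarrow> ('c \<Rightarrow>\<^sub>0 'k)"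
  assumes op_e: "op v e = v"
begin

abbreviation PM where "PM \<equiv> bmul (tmul (\<lambda>v w. bas (op v w)) mul)"
abbreviation Bop where "Bop \<equiv> bmul (\<lambda>v w. bas (op v w))"
abbreviation gen where "gen b \<equiv> lin (\<lambda>(i, j). tens (g i) (bas j)) (cmul b)"
abbreviation W where "W \<equiv> lin (\<lambda>w. foldr (\<lambda>b acc. PM (gen b) acc) w (tens (bas e) one))"

lemma PM_tens: "PM (tens \<alpha> u) (tens \<beta> v) = tens (Bop \<alpha> \<beta>) (m u v)"
proof (rule bilin_eq[of "\<lambda>\<alpha> u. PM (tens \<alpha> u) (tens \<beta> v)" "\<lambda>\<alpha> u. tens (Bop \<alpha> \<beta>) (m u v)"])
  show "bilin (\<lambda>\<alpha> u. PM (tens \<alpha> u) (tens \<beta> v))"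
    by (intro bilinI lmap_comp[OF bilinD2[OF bilin_bmul] lmap_tens2] lmap_comp[OF bilinD2[OF bilin_bmul] lmap_tens1])
  show "bilin (\<lambda>\<alpha> u. tens (Bop \<alpha> \<beta>) (m u v))"
    by (intro bilinI lmap_comp[OF lmap_tens2 bilinD2[OF bilin_bmul]] lmap_comp[OF lmap_tens1 bilinD2[OF bilin_bmul]])
  fix c a
  show "PM (tens (bas c) (bas a)) (tens \<beta> v) = tens (Bop (bas c) \<beta>) (m (bas a) v)"
  proof (rule bilin_eq[of "\<lambda>\<beta> v. PM (tens (bas c) (bas a)) (tens \<beta> v)" "\<lambda>\<beta> v. tens (Bop (bas c) \<beta>) (m (bas a) v)"])
    show "bilin (\<lambda>\<beta> v. PM (tens (bas c) (bas a)) (tens \<beta> v))"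
      by (intro bilinI lmap_comp[OF bilinD1[OF bilin_bmul] lmap_tens2] lmap_comp[OF bilinD1[OF bilin_bmul] lmap_tens1])
    show "bilin (\<lambda>\<beta> v. tens (Bop (bas c) \<beta>) (m (bas a) v))"
      by (intro bilinI lmap_comp[OF lmap_tens2 bilinD1[OF bilin_bmul]] lmap_comp[OF lmap_tens1 bilinD1[OF bilin_bmul]])
  qed (simp add: tmul_def)
qed

lemma PM_unit: "PM z (tens (bas e) one) = z"
proof -
  have "PM z (tens (bas e) one) = lin (\<lambda>p. PM (bas p) (tens (bas e) one)) z"
    by (rule lmap_lin_bas[OF bilinD2[OF bilin_bmul], symmetric])
  also have "\<dots> = lin bas z"
  proof (rule lin_cong)
    fix p :: "'c \<times> 'b" obtain c a where p: "p = (c, a)" by (cases p)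
    have "PM (bas p) (tens (bas e) one) = PM (tens (bas c) (bas a)) (tens (bas e) one)" by (simp add: p)
    also have "\<dots> = bas p" by (subst PM_tens) (simp add: op_e p)
    finally show "PM (bas p) (tens (bas e) one) = bas p" .
  qed
  finally show ?thesis by simp
qed

lemma Gv: "lin gen u = sw (\<lambda>a b. tens (lin g a) b) u"
proof -
  have "sw (\<lambda>a b. tens (lin g a) b) u = lin (\<lambda>b. sw (\<lambda>a b. tens (lin g a) b) (bas b)) u"
    by (rule lmap_lin_bas[OF lmap_swc, symmetric])
  also have "\<dots> = lin gen u"
    by (rule lin_cong) (simp add: swc_def swb_def case_prod_unfold)
  finally show ?thesis by simp
qed

lemma lmap_W: "lmap W" by simp

lemma W2: "W (TH_mul (XH u) (XH v)) = PM (lin gen u) (lin gen v)"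
proof (rule bilin_eq[of "\<lambda>u v. W (TH_mul (XH u) (XH v))" "\<lambda>u v. PM (lin gen u) (lin gen v)"])
  show "bilin (\<lambda>u v. W (TH_mul (XH u) (XH v)))"
    by (intro bilinI lmap_comp[OF lmap_W] lmap_comp[OF bilinD1[OF bilin_TH_mul] lmap_XH]
        lmap_comp[OF bilinD2[OF bilin_TH_mul] lmap_XH])
  show "bilin (\<lambda>u v. PM (lin gen u) (lin gen v))"
    by (intro bilinI lmap_comp[OF bilinD1[OF bilin_bmul] lmap_lin_self]
        lmap_comp[OF bilinD2[OF bilin_bmul] lmap_lin_self])
qed (simp add: XH_def TH_mul_def PM_unit)

lemma W3: "W (TH_mul (XH u) (TH_mul (XH u') (XH w))) = PM (lin gen u) (PM (lin gen u') (lin gen w))"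
proof (rule bilin_eq[of "\<lambda>u u'. W (TH_mul (XH u) (TH_mul (XH u') (XH w)))" "\<lambda>u u'. PM (lin gen u) (PM (lin gen u') (lin gen w))"])
  show "bilin (\<lambda>u u'. W (TH_mul (XH u) (TH_mul (XH u') (XH w))))"
    by (intro bilinI lmap_comp[OF lmap_W] lmap_comp[OF bilinD1[OF bilin_TH_mul]] lmap_XH
        lmap_comp[OF bilinD2[OF bilin_TH_mul] lmap_XH] lmap_comp[OF bilinD2[OF bilin_TH_mul]])
  show "bilin (\<lambda>u u'. PM (lin gen u) (PM (lin gen u') (lin gen w)))"
    by (intro bilinI lmap_comp[OF bilinD1[OF bilin_bmul]] lmap_comp[OF bilinD2[OF bilin_bmul]] lmap_lin_self)
  fix a a'
  show "W (TH_mul (XH (bas a)) (TH_mul (XH (bas a')) (XH w))) = PM (lin gen (bas a)) (PM (lin gen (bas a')) (lin gen w))"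
  proof -
    have l1: "lmap (\<lambda>w. W (TH_mul (XH (bas a)) (TH_mul (XH (bas a')) (XH w))))"
      by (intro lmap_comp[OF lmap_W] lmap_comp[OF bilinD1[OF bilin_TH_mul]] lmap_XH)
    have l2: "lmap (\<lambda>w. PM (lin gen (bas a)) (PM (lin gen (bas a')) (lin gen w)))"
      by (intro lmap_comp[OF bilinD1[OF bilin_bmul]] lmap_lin_self)
    show ?thesis
      using lmap_lin_bas[OF l1, of w] lmap_lin_bas[OF l2, of w]
      by (simp add: XH_def TH_mul_def PM_unit)
  qed
qed

end

context hopf_word begin

lemma PM_sw_left: "PM (sw F u) z = sw (\<lambda>a b. PM (F a b) z) u"
  by (rule swc_push[OF bilinD2[OF bilin_bmul]])
lemma PM_sw_right: "PM z (sw F u) = sw (\<lambda>a b. PM z (F a b)) u"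
  by (rule swc_push[OF bilinD1[OF bilin_bmul]])

lemma PM2: "PM (lin gen u) (lin gen w) = sw (\<lambda>a b. sw (\<lambda>c d. tens (Bop (lin g a) (lin g c)) (m b d)) w) u"
  apply (simp only: Gv)
  apply (subst PM_sw_left)
  apply (simp only: PM_sw_right PM_tens)
  done

lemma PM3: "PM (lin gen u) (PM (lin gen u') (lin gen w))
   = sw (\<lambda>a b. sw (\<lambda>a' b'. sw (\<lambda>c d. tens (Bop (lin g a) (Bop (lin g a') (lin g c))) (m (m b b') d)) w) u') u"
  apply (simp only: PM2)
  apply (simp only: Gv)
  apply (subst PM_sw_left)
  apply (simp only: PM_sw_right PM_tens m_assoc[symmetric])
  done

lemma bilinK2: "bilin (\<lambda>c f. tens (Bop (lin g a) (lin g c)) f)"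
  by (intro bilinI lmap_tens2 lmap_comp[OF lmap_tens1] lmap_comp[OF bilinD1[OF bilin_bmul] lmap_lin_self])

lemma bilinK3: "bilin (\<lambda>c f. tens (Bop (lin g a) (Bop (lin g a') (lin g c))) f)"
  by (intro bilinI lmap_tens2 lmap_comp[OF lmap_tens1] lmap_comp[OF bilinD1[OF bilin_bmul]]
      lmap_comp[OF bilinD1[OF bilin_bmul] lmap_lin_self])

lemma Wp: "W (sw (\<lambda>u v. TH_mul (XH u) (XH (S v))) x) = tens (sw (\<lambda>u v. Bop (lin g u) (lin g (S v))) x) one"
proof -
  have "W (sw (\<lambda>u v. TH_mul (XH u) (XH (S v))) x) = sw (\<lambda>u v. W (TH_mul (XH u) (XH (S v)))) x"
    by (rule swc_push[OF lmap_W])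
  also have "\<dots> = sw (\<lambda>u v. sw (\<lambda>a b. sw (\<lambda>c d. tens (Bop (lin g a) (lin g c)) (m b d)) (S v)) u) x"
    by (simp only: W2 PM2)
  also have "\<dots> = sw (\<lambda>u v. tens (Bop (lin g u) (lin g (S v))) one) x"
    by (rule P_id[OF bilinK2])
  also have "\<dots> = tens (sw (\<lambda>u v. Bop (lin g u) (lin g (S v))) x) one"
    by (rule swc_push[OF lmap_tens1, symmetric])
  finally show ?thesis .
qed

lemma Wq: "W (sw (\<lambda>u v. sw (\<lambda>u' v'. TH_mul (XH u) (TH_mul (XH u') (XH (S (m v v'))))) y) x)
   = tens (sw (\<lambda>u v. sw (\<lambda>u' v'. Bop (lin g u) (Bop (lin g u') (lin g (S (m v v'))))) y) x) one"
proof -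
  have "W (sw (\<lambda>u v. sw (\<lambda>u' v'. TH_mul (XH u) (TH_mul (XH u') (XH (S (m v v'))))) y) x)
     = sw (\<lambda>u v. sw (\<lambda>u' v'. W (TH_mul (XH u) (TH_mul (XH u') (XH (S (m v v')))))) y) x"
    by (simp only: swc_push[OF lmap_W])
  also have "\<dots> = sw (\<lambda>u v. sw (\<lambda>u' v'. sw (\<lambda>a b. sw (\<lambda>a' b'. sw (\<lambda>c d. tens (Bop (lin g a) (Bop (lin g a') (lin g c))) (m (m b b') d)) (S (m v v'))) u') u) y) x"
    by (simp only: W3 PM3)
  also have "\<dots> = sw (\<lambda>u v. sw (\<lambda>u' v'. tens (Bop (lin g u) (Bop (lin g u') (lin g (S (m v v'))))) one) y) x"
    by (rule Q_id[OF bilinK3])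
  also have "\<dots> = tens (sw (\<lambda>u v. sw (\<lambda>u' v'. Bop (lin g u) (Bop (lin g u') (lin g (S (m v v'))))) y) x) one"
    by (simp only: swc_push[OF lmap_tens1])
  finally show ?thesis .
qed

end

lemma tH_eq: "tH = lin tvar" by (rule ext) (simp add: tH_def)

lemma lmap_mult: "lmap (\<lambda>Q. (P::('b \<Rightarrow>\<^sub>0 nat) \<Rightarrow>\<^sub>0 'k::field) * Q)"
  unfolding lmap_def
proof (intro conjI allI)
  fix u v :: "('b \<Rightarrow>\<^sub>0 nat) \<Rightarrow>\<^sub>0 'k" and r
  show "P * (u + v) = P * u + P * v" by (simp add: distrib_left)
  have "smult r u = Poly_Mapping.single 0 r * u"
    unfolding smult_def by (rule mult_map_scale_conv_mult)
  moreover have "smult r (P * u) = Poly_Mapping.single 0 r * (P * u)"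
    unfolding smult_def by (rule mult_map_scale_conv_mult)
  ultimately show "P * smult r u = smult r (P * u)" by (simp add: ac_simps)
qed

lemma Bop_times: "bmul (\<lambda>v w. bas (v + w)) P Q = (P::('b \<Rightarrow>\<^sub>0 nat) \<Rightarrow>\<^sub>0 'k::field) * Q"
proof (rule bilin_eq[of "bmul (\<lambda>v w. bas (v + w))" "\<lambda>P Q. P * Q"])
  show "bilin (bmul (\<lambda>v w. bas (v + w)))" by (rule bilin_bmul)
  show "bilin (\<lambda>P Q::('b \<Rightarrow>\<^sub>0 nat) \<Rightarrow>\<^sub>0 'k. P * Q)"
    by (intro bilinI lmap_mult) (simp add: lmap_mult mult.commute[of _ "_::('b \<Rightarrow>\<^sub>0 nat) \<Rightarrow>\<^sub>0 'k"])
qed (subst bmul_bas, simp add: bas_def mult_single)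

theorem lemma5p1:
  fixes mul :: "'b \<Rightarrow> 'b \<Rightarrow> ('b \<Rightarrow>\<^sub>0 'k::field)"
    and one :: "'b \<Rightarrow>\<^sub>0 'k"
    and cmul :: "'b \<Rightarrow> ('b \<times> 'b \<Rightarrow>\<^sub>0 'k)"
    and cu :: "'b \<Rightarrow> 'k"
    and ant :: "'b \<Rightarrow> ('b \<Rightarrow>\<^sub>0 'k)"
    and x y :: "'b \<Rightarrow>\<^sub>0 'k"
  assumes "hopf_algebra mul one cmul cu ant"
  shows "tens (p_el cmul ant x) one \<in> mubar_V_H mul one cmul \<and>
         tens (q_el mul cmul ant x y) one \<in> mubar_V_H mul one cmul"
proof -
  interpret T: hopf_word mul one cmul cu ant "(@)" "[]" "\<lambda>i. bas [i]"
    by (intro hopf_word.intro hopf.intro hopf_word_axioms.intro assms) simp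
  interpret M: hopf_word mul one cmul cu ant "(+)" 0 tvar
    by (intro hopf_word.intro hopf.intro hopf_word_axioms.intro assms) simp
  have dT: "deltaT mul one cmul = T.W"
    by (simp add: deltaT_def deltaT_gen_def)
  have mu: "mu mul one cmul = M.W"
    by (simp add: mu_def SH_mul_def SH_one_def mu_gen_def bas_def)
  have zero: "0 \<in> I_H_tensor_H mul one cmul"
    unfolding I_H_tensor_H_def by (rule CollectI, rule exI[of _ 0]) simp
  define ap where "ap = swc cmul (\<lambda>u v. TH_mul (XH u) (XH (lin ant v))) x"
  define aq where "aq = swc cmul (\<lambda>u v. swc cmul (\<lambda>u' v'. TH_mul (XH u) (TH_mul (XH u') (XH (lin ant (bmul mul v v'))))) y) x"
  have dp: "deltaT mul one cmul ap = tens ap one"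
    unfolding dT ap_def using T.Wp[of x] by (simp add: XH_eq TH_mul_def)
  have dq: "deltaT mul one cmul aq = tens aq one"
    unfolding dT aq_def using T.Wq[of y x] by (simp add: XH_eq TH_mul_def)
  have mp: "mu mul one cmul ap = tens (p_el cmul ant x) one"
    unfolding mu ap_def M.Wp
    by (simp add: tH_eq[symmetric] Bop_times p_el_def swc_def swb_def)
  have mq: "mu mul one cmul aq = tens (q_el mul cmul ant x y) one"
    unfolding mu aq_def M.Wq
    by (simp add: tH_eq[symmetric] Bop_times q_el_def swc_def swb_def mult.assoc)
  have "tens (p_el cmul ant x) one \<in> mubar_V_H mul one cmul"
    unfolding mubar_V_H_def by (rule CollectI, rule exI[of _ ap]) (simp add: mp dp zero)
  moreover have "tens (q_el mul cmul ant x y) one \<in> mubar_V_H mul one cmul"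
    unfolding mubar_V_H_def by (rule CollectI, rule exI[of _ aq]) (simp add: mq dq zero)
  ultimately show ?thesis ..
qed

end
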